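(* Let $\mathcal{H}\subseteq\{0,1\}^{\mathcal{X}}$ be a class, $m\in\mathbb{N}$, and let $\omega^\star_m$ be the fractional clique number of $G_m(\mathcal{H})$. Then there is a regular Borel probability measure $\mu^\star$ on $\{0,1\}^{\mathcal{X}}$ (product topology) such that for every $\mathcal{H}$-realizable dataset $S$ of size $m$, $\Pr_{h\sim\mu^\star}[h\text{ is consistent with }S]\ge 1/\omega^\star_m$.
   Context: A dataset of size $m$ is $S=((x_1,y_1),\dots,(x_m,y_m))\in(\mathcal{X}\times\{0,1\})^m$; $h$ is consistent with $S$ if $h(x_i)=y_i$ for all $i$; $S$ is $\mathcal{H}$-realizable if some $h\in\mathcal{H}$ is consistent with it. $G_m(\mathcal{H})$ is the graph on the realizable datasets of size $m$ with $S,S'$ adjacent iff there is $x$ with $(x,0)$ appearing in $S$ and $(x,1)$ appearing in $S'$. A fractional clique of a graph $G=(V,E)$ is $\delta:V\to[0,\infty)$ with $\sum_{v\in I}\delta(v)\le1$ for every independent set $I$; $\omega^\star_m$ is the supremum of $\sum_v\delta(v)$ over fractional cliques of $G_m(\mathcal{H})$. *)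

theory Defs
  imports "HOL-Analysis.Analysis" "HOL-Probability.Probability"
begin

text \<open>Datasets of size m are lists of labelled points; labels 0/1 are False/True.
  Hypotheses are functions 'x \<Rightarrow> bool; the type 'x \<Rightarrow> bool carries the
  product topology (Function_Topology) of the discrete topology on bool.\<close>

type_synonym 'x dataset = "('x \<times> bool) list"

definition consistent :: "('x \<Rightarrow> bool) \<Rightarrow> 'x dataset \<Rightarrow> bool" where
  "consistent h S \<longleftrightarrow> (\<forall>i<length S. h (fst (S ! i)) = snd (S ! i))"

definition realizable :: "('x \<Rightarrow> bool) set \<Rightarrow> 'x dataset \<Rightarrow> bool" where
  "realizable H S \<longleftrightarrow> (\<exists>h\<in>H. consistent h S)"

definition Gm_vertices :: "('x \<Rightarrow> bool) set \<Rightarrow> nat \<Rightarrow> 'x dataset set" where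
  "Gm_vertices H m = {S. length S = m \<and> realizable H S}"

text \<open>Adjacency in G_m(H) (undirected: symmetric closure of the defining relation).\<close>
definition Gm_adj :: "'x dataset \<Rightarrow> 'x dataset \<Rightarrow> bool" where
  "Gm_adj S S' \<longleftrightarrow>
     (\<exists>x. ((x, False) \<in> set S \<and> (x, True) \<in> set S') \<or> ((x, False) \<in> set S' \<and> (x, True) \<in> set S))"

definition Gm_independent :: "('x \<Rightarrow> bool) set \<Rightarrow> nat \<Rightarrow> 'x dataset set \<Rightarrow> bool" where
  "Gm_independent H m I \<longleftrightarrow> I \<subseteq> Gm_vertices H m \<and> (\<forall>S\<in>I. \<forall>S'\<in>I. \<not> Gm_adj S S')"

definition nnsum :: "('a \<Rightarrow> real) \<Rightarrow> 'a set \<Rightarrow> ennreal" where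
  "nnsum f A = (SUP F\<in>{F. finite F \<and> F \<subseteq> A}. ennreal (sum f F))"

definition fractional_clique :: "('x \<Rightarrow> bool) set \<Rightarrow> nat \<Rightarrow> ('x dataset \<Rightarrow> real) \<Rightarrow> bool" where
  "fractional_clique H m \<delta> \<longleftrightarrow>
     (\<forall>S\<in>Gm_vertices H m. \<delta> S \<ge> 0) \<and>
     (\<forall>I. Gm_independent H m I \<longrightarrow> nnsum \<delta> I \<le> 1)"

definition frac_clique_number :: "('x \<Rightarrow> bool) set \<Rightarrow> nat \<Rightarrow> ennreal" where
  "frac_clique_number H m =
     (SUP \<delta>\<in>{\<delta>. fractional_clique H m \<delta>}. nnsum \<delta> (Gm_vertices H m))"

definition regular_borel_measure :: "'a::topological_space measure \<Rightarrow> bool" where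
  "regular_borel_measure M \<longleftrightarrow>
     sets M = sets borel \<and>
     (\<forall>A\<in>sets borel.
        emeasure M A = (INF U\<in>{U. open U \<and> A \<subseteq> U}. emeasure M U) \<and>
        emeasure M A = (SUP K\<in>{K. compact K \<and> K \<subseteq> A}. emeasure M K))"

end

theory Submission
  imports Defs
begin


definition clop :: "'a::topological_space set \<Rightarrow> bool" where
  "clop C \<longleftrightarrow> open C \<and> closed C"

lemma compact_UNIV_fb: "compact (UNIV :: ('x \<Rightarrow> bool) set)"
proof -
  have e: "UNIV = PiE UNIV (\<lambda>_::'x. UNIV::bool set)" by auto
  have "compactin (product_topology (\<lambda>_. euclidean) UNIV) (PiE UNIV (\<lambda>_::'x. UNIV::bool set))"
    by (subst compactin_PiE) (simp add: compactin_euclidean_iff finite_imp_compact)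
  then show ?thesis
    by (simp add: euclidean_product_topology compactin_euclidean_iff e[symmetric])
qed

lemma closed_coord_eq: "closed {g::'x\<Rightarrow>bool. g i = b}"
proof -
  have "closed {g::'x\<Rightarrow>bool. g i = (\<lambda>_. b) g}"
    by (rule closed_Collect_eq) (auto intro: continuous_on_const)
  then show ?thesis by simp
qed

lemma clop_cyl:
  assumes "finite J"
  shows "clop {g::'x\<Rightarrow>bool. \<forall>i\<in>J. g (x i) = b i}"
proof -
  have "open {g::'x\<Rightarrow>bool. \<forall>i\<in>J. g (x i) \<in> {b i}}"
    by (rule product_topology_basis') (use assms in \<open>auto intro: discrete_topology_class.open_discrete\<close>)
  moreover have "{g::'x\<Rightarrow>bool. \<forall>i\<in>J. g (x i) = b i} = (\<Inter>i\<in>J. {g. g (x i) = b i})" by auto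
  moreover have "closed (\<Inter>i\<in>J. {g::'x\<Rightarrow>bool. g (x i) = b i})"
    by (intro closed_INT ballI closed_coord_eq)
  ultimately show ?thesis unfolding clop_def by auto
qed

lemma clop_consistent: "clop {h. consistent h S}"
proof -
  have "{h. consistent h S} = {g. \<forall>i\<in>{..<length S}. g (fst (S!i)) = snd (S!i)}"
    by (auto simp: consistent_def)
  then show ?thesis using clop_cyl[of "{..<length S}" "\<lambda>i. fst (S!i)" "\<lambda>i. snd (S!i)"] by simp
qed

lemma zero_dim:
  assumes "open (U :: ('x\<Rightarrow>bool) set)" "h \<in> U"
  shows "\<exists>C. clop C \<and> h \<in> C \<and> C \<subseteq> U"
proof -
  from assms obtain V where V: "finite {i \<in> UNIV. V i \<noteq> topspace euclidean}"
    "\<forall>i\<in>UNIV. openin euclidean (V i)" "h \<in> PiE UNIV V" "PiE UNIV V \<subseteq> U"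
    unfolding open_fun_def openin_product_topology_alt by blast
  define J where "J = {i. V i \<noteq> UNIV}"
  have fJ: "finite J" using V(1) by (simp add: J_def)
  define C where "C = {g::'x\<Rightarrow>bool. \<forall>i\<in>J. g (id i) = h i}"
  have "clop C" unfolding C_def by (rule clop_cyl[OF fJ])
  moreover have "h \<in> C" by (simp add: C_def)
  moreover have "C \<subseteq> PiE UNIV V"
  proof
    fix g assume "g \<in> C"
    have "g i \<in> V i" for i
    proof (cases "i \<in> J")
      case True then show ?thesis using \<open>g \<in> C\<close> V(3) by (auto simp: C_def PiE_iff)
    next
      case False then show ?thesis by (auto simp: J_def)
    qed
    then show "g \<in> PiE UNIV V" by (auto simp: PiE_iff)
  qed
  ultimately show ?thesis using V(4) by blast
qed

lemma clop_compact: "clop (C :: ('x\<Rightarrow>bool) set) \<Longrightarrow> compact C"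
  unfolding clop_def using compact_UNIV_fb closed_Int_compact[of C UNIV] by simp

lemma clop_Un: "clop A \<Longrightarrow> clop B \<Longrightarrow> clop (A \<union> B)"
  unfolding clop_def by auto
lemma clop_empty: "clop {}" unfolding clop_def by auto
lemma clop_UNIV: "clop UNIV" unfolding clop_def by auto
lemma clop_Union: "finite N \<Longrightarrow> (\<And>i. i \<in> N \<Longrightarrow> clop (E i)) \<Longrightarrow> clop (\<Union>i\<in>N. E i)"
  unfolding clop_def by (auto intro: open_UN closed_UN)

lemma compact_closed_fb: "compact (K::('x\<Rightarrow>bool) set) \<Longrightarrow> closed K"
proof -
  assume K: "compact K"
  have "Hausdorff_space (product_topology (\<lambda>_::'x. (euclidean::bool topology)) UNIV)"
  proof -
    have "Hausdorff_space (euclidean::bool topology)"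
      unfolding Hausdorff_space_def
    proof (intro allI impI)
      fix x y :: bool assume "x \<in> topspace euclidean \<and> y \<in> topspace euclidean \<and> x \<noteq> y"
      then have "x \<noteq> y" by simp
      show "\<exists>U V. openin euclidean U \<and> openin euclidean V \<and> x \<in> U \<and> y \<in> V \<and> disjnt U V"
        by (rule exI[of _ "{x}"], rule exI[of _ "{y}"])
           (use \<open>x \<noteq> y\<close> in \<open>auto simp: disjnt_def intro: discrete_topology_class.open_discrete\<close>)
    qed
    then show ?thesis by (simp add: Hausdorff_space_product_topology)
  qed
  then have H: "Hausdorff_space (euclidean :: ('x\<Rightarrow>bool) topology)" by (simp add: euclidean_product_topology)
  have "compactin euclidean K" using K by (simp add: compactin_euclidean_iff)
  then have "closedin euclidean K" by (rule compactin_imp_closedin[OF H])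
  then show ?thesis by simp
qed


locale charge =
  fixes lam :: "('x \<Rightarrow> bool) set \<Rightarrow> real"
  assumes nonneg: "\<And>A. 0 \<le> lam A"
    and total: "lam UNIV = 1"
    and additive: "\<And>A B. A \<inter> B = {} \<Longrightarrow> lam (A \<union> B) = lam A + lam B"
begin

lemma lam_empty: "lam {} = 0"
  using additive[of "{}" "{}"] by simp

lemma lam_mono: "A \<subseteq> B \<Longrightarrow> lam A \<le> lam B"
proof -
  assume "A \<subseteq> B"
  then have "B = A \<union> (B - A)" by auto
  then have "lam B = lam A + lam (B - A)" using additive[of A "B - A"] by auto
  then show ?thesis using nonneg[of "B - A"] by simp
qed

lemma lam_le1: "lam A \<le> 1"
  using lam_mono[of A UNIV] total by simp

lemma lam_Un_le: "lam (A \<union> B) \<le> lam A + lam B"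
proof -
  have "A \<union> B = A \<union> (B - A)" by auto
  then have "lam (A \<union> B) = lam A + lam (B - A)" using additive[of A "B - A"] by auto
  then show ?thesis using lam_mono[of "B - A" B] by simp
qed

lemma lam_UN_le: "finite N \<Longrightarrow> lam (\<Union>i\<in>N. E i) \<le> (\<Sum>i\<in>N. lam (E i))"
proof (induction N rule: finite_induct)
  case empty then show ?case by (simp add: lam_empty)
next
  case (insert a N)
  have "lam (\<Union>i\<in>insert a N. E i) = lam (E a \<union> (\<Union>i\<in>N. E i))" by simp
  also have "\<dots> \<le> lam (E a) + lam (\<Union>i\<in>N. E i)" by (rule lam_Un_le)
  also have "\<dots> \<le> lam (E a) + (\<Sum>i\<in>N. lam (E i))" using insert by simp
  finally show ?case using insert by simp
qed

definition nu :: "('x \<Rightarrow> bool) set \<Rightarrow> ennreal" where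
  "nu U = (SUP C\<in>{C. clop C \<and> C \<subseteq> U}. ennreal (lam C))"

definition mu :: "('x \<Rightarrow> bool) set \<Rightarrow> ennreal" where
  "mu A = (INF U\<in>{U. open U \<and> A \<subseteq> U}. nu U)"

lemma nu_ge: "clop C \<Longrightarrow> C \<subseteq> U \<Longrightarrow> ennreal (lam C) \<le> nu U"
  unfolding nu_def by (rule SUP_upper) auto

lemma nu_le1: "nu U \<le> 1"
  unfolding nu_def by (rule SUP_least) (use lam_le1 in auto)

lemma nu_mono: "U \<subseteq> V \<Longrightarrow> nu U \<le> nu V"
  unfolding nu_def by (rule SUP_subset_mono) auto

lemma mu_le_nu: "open U \<Longrightarrow> A \<subseteq> U \<Longrightarrow> mu A \<le> nu U"
  unfolding mu_def by (rule INF_lower) auto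

lemma mu_mono: "A \<subseteq> B \<Longrightarrow> mu A \<le> mu B"
  unfolding mu_def by (rule INF_superset_mono) auto

lemma mu_le1: "mu A \<le> 1"
  using mu_le_nu[of UNIV A] nu_le1[of UNIV] by simp

lemma mu_fin: "mu A < \<top>"
  using mu_le1[of A] by (simp add: order_le_less_trans)

lemma mu_ge_clop: "clop C \<Longrightarrow> ennreal (lam C) \<le> mu C"
  unfolding mu_def by (rule INF_greatest) (auto intro: nu_ge)

lemma mu_empty: "mu {} = 0"
proof -
  have "nu {} \<le> 0" unfolding nu_def by (rule SUP_least) (auto simp: lam_empty)
  then have "mu {} \<le> 0" using mu_le_nu[of "{}" "{}"] by simp
  then show ?thesis by simp
qed

lemma mu_UNIV: "mu UNIV = 1"
proof (rule antisym)
  show "mu UNIV \<le> 1" by (rule mu_le1)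
  show "1 \<le> mu UNIV" using mu_ge_clop[OF clop_UNIV] total by simp
qed

lemma nu_countable_subadd:
  assumes "\<And>i. open (U i)"
  shows "nu (\<Union>i. U i) \<le> (\<Sum>i. nu (U i))"
  unfolding nu_def[of "\<Union>i. U i"]
proof (rule SUP_least)
  fix C assume "C \<in> {C. clop C \<and> C \<subseteq> (\<Union>i. U i)}"
  then have C: "clop C" "C \<subseteq> (\<Union>i. U i)" by auto
  define \<D> where "\<D> = {D. clop D \<and> (\<exists>i. D \<subseteq> U i)}"
  have "C \<subseteq> \<Union>\<D>"
  proof
    fix h assume "h \<in> C"
    then obtain i where "h \<in> U i" using C by auto
    then obtain D where "clop D" "h \<in> D" "D \<subseteq> U i" using zero_dim[OF assms] by blast
    then show "h \<in> \<Union>\<D>" unfolding \<D>_def by blast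
  qed
  moreover have "\<forall>D\<in>\<D>. open D" unfolding \<D>_def clop_def by auto
  ultimately obtain \<D>' where D': "\<D>' \<subseteq> \<D>" "finite \<D>'" "C \<subseteq> \<Union>\<D>'"
    using compactE[OF clop_compact[OF C(1)]] by metis
  have "\<forall>D\<in>\<D>'. \<exists>i. D \<subseteq> U i" using D'(1) unfolding \<D>_def by blast
  then obtain ix where ix: "\<And>D. D \<in> \<D>' \<Longrightarrow> D \<subseteq> U (ix D)" by metis
  define N where "N = ix ` \<D>'"
  define E where "E i = \<Union>{D\<in>\<D>'. ix D = i}" for i
  have fN: "finite N" using D'(2) by (simp add: N_def)
  have clE: "clop (E i)" for i
  proof -
    have "E i = (\<Union>D\<in>{D\<in>\<D>'. ix D = i}. id D)" by (simp add: E_def)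
    moreover have "clop (\<Union>D\<in>{D\<in>\<D>'. ix D = i}. id D)"
      by (rule clop_Union) (use D' in \<open>auto simp: \<D>_def\<close>)
    ultimately show ?thesis by simp
  qed
  have EU: "E i \<subseteq> U i" for i using ix by (auto simp: E_def)
  have "C \<subseteq> (\<Union>i\<in>N. E i)"
  proof
    fix h assume "h \<in> C"
    then obtain D where "D \<in> \<D>'" "h \<in> D" using D'(3) by blast
    then show "h \<in> (\<Union>i\<in>N. E i)" unfolding E_def N_def by blast
  qed
  then have "lam C \<le> (\<Sum>i\<in>N. lam (E i))"
    using lam_mono lam_UN_le[OF fN, of E] by (meson order_trans)
  then have "ennreal (lam C) \<le> ennreal (\<Sum>i\<in>N. lam (E i))" by (rule ennreal_leI)
  also have "\<dots> = (\<Sum>i\<in>N. ennreal (lam (E i)))" by (rule sum_ennreal[symmetric]) (use nonneg in auto)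
  also have "\<dots> \<le> (\<Sum>i\<in>N. nu (U i))" by (rule sum_mono) (use nu_ge clE EU in blast)
  also have "\<dots> \<le> (\<Sum>i. nu (U i))" by (rule sum_le_suminf) (use fN in auto)
  finally have XX: "ennreal (lam C) \<le> (\<Sum>i. nu (U i))" .
  then show "ennreal (lam C) \<le> (\<Sum>i. nu (U i))" .
qed

lemma half_sum: "(\<Sum>i. ennreal (e / 2 ^ Suc i)) = ennreal e" if "0 \<le> e" for e :: real
proof -
  have s: "(\<lambda>i. e * (1/2) ^ Suc i) sums (e * 1)" by (rule sums_mult) (rule power_half_series)
  have eq: "(\<lambda>i. e / 2 ^ Suc i) = (\<lambda>i. e * (1/2) ^ Suc i)" by (auto simp: power_divide)
  have "(\<Sum>i. ennreal (e / 2 ^ Suc i)) = ennreal (\<Sum>i. e / 2 ^ Suc i)"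
    by (rule suminf_ennreal2) (use that s eq in \<open>auto simp: sums_iff\<close>)
  also have "(\<Sum>i. e / 2 ^ Suc i) = e" using s eq by (simp add: sums_iff)
  finally show ?thesis .
qed

lemma mu_countable_subadd: "mu (\<Union>i. A i) \<le> (\<Sum>i. mu (A i))"
proof (rule ennreal_le_epsilon)
  fix e :: real assume "0 < e"
  have "\<exists>U. open U \<and> A i \<subseteq> U \<and> nu U < mu (A i) + ennreal (e / 2^(Suc i))" for i
  proof -
    have "mu (A i) < mu (A i) + ennreal (e/2^Suc i)" using mu_fin[of "A i"] \<open>0 < e\<close> by simp
    then show ?thesis unfolding mu_def[of "A i"] by (subst (asm) INF_less_iff) auto
  qed
  then obtain U where U: "\<And>i. open (U i)" "\<And>i. A i \<subseteq> U i"
     "\<And>i. nu (U i) < mu (A i) + ennreal (e/2^Suc i)" by metis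
  have "mu (\<Union>i. A i) \<le> nu (\<Union>i. U i)" by (rule mu_le_nu) (use U in auto)
  also have "\<dots> \<le> (\<Sum>i. nu (U i))" by (rule nu_countable_subadd) (rule U)
  also have "\<dots> \<le> (\<Sum>i. mu (A i) + ennreal (e/2^Suc i))"
    by (rule suminf_le, rule less_imp_le[OF U(3)], auto)
  also have "\<dots> = (\<Sum>i. mu (A i)) + (\<Sum>i. ennreal (e/2^Suc i))"
    by (rule suminf_add[symmetric]) auto
  also have "(\<Sum>i. ennreal (e/2^Suc i)) = ennreal e" by (rule half_sum) (use \<open>0 < e\<close> in simp)
  finally show "mu (\<Union>i. A i) \<le> (\<Sum>i. mu (A i)) + ennreal e" .
qed

lemma mu_subadd: "mu (X \<union> Y) \<le> mu X + mu Y"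
proof -
  have "mu (\<Union>i. binaryset X Y i) \<le> (\<Sum>i. mu (binaryset X Y i))" by (rule mu_countable_subadd)
  moreover have "(\<Union>i. binaryset X Y i) = X \<union> Y" by (simp add: range_binaryset_eq)
  moreover have "(\<Sum>i. mu (binaryset X Y i)) = mu X + mu Y" by (rule suminf_binaryset_eq) (rule mu_empty)
  ultimately show ?thesis by simp
qed

lemma open_split:
  assumes "open U"
  shows "mu (B \<inter> U) + mu (B - U) \<le> mu B"
  unfolding mu_def[of B]
proof (rule INF_greatest)
  fix V assume "V \<in> {V. open V \<and> B \<subseteq> V}"
  then have V: "open V" "B \<subseteq> V" by auto
  have "mu (B \<inter> U) \<le> nu (V \<inter> U)" by (rule mu_le_nu) (use V assms in auto)
  moreover have "nu (V \<inter> U) + mu (B - U) \<le> nu V"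
  proof -
    have "nu (V \<inter> U) + mu (B - U) = (SUP C\<in>{C. clop C \<and> C \<subseteq> V \<inter> U}. ennreal (lam C) + mu (B - U))"
      unfolding nu_def[of "V \<inter> U"] by (rule ennreal_SUP_add_left[symmetric]) (use clop_empty in auto)
    also have "\<dots> \<le> nu V"
    proof (rule SUP_least)
      fix C assume "C \<in> {C. clop C \<and> C \<subseteq> V \<inter> U}"
      then have C: "clop C" "C \<subseteq> V \<inter> U" by auto
      have "mu (B - U) \<le> nu (V - C)" by (rule mu_le_nu) (use V C in \<open>auto simp: clop_def\<close>)
      moreover have "ennreal (lam C) + nu (V - C) \<le> nu V"
      proof -
        have "ennreal (lam C) + nu (V - C) = (SUP D\<in>{D. clop D \<and> D \<subseteq> V - C}. ennreal (lam C) + ennreal (lam D))"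
          unfolding nu_def[of "V - C"] by (rule ennreal_SUP_add_right) (use clop_empty in auto)
        also have "\<dots> \<le> nu V"
        proof (rule SUP_least)
          fix D assume "D \<in> {D. clop D \<and> D \<subseteq> V - C}"
          then have D: "clop D" "D \<subseteq> V - C" by auto
          have "ennreal (lam C) + ennreal (lam D) = ennreal (lam (C \<union> D))"
          proof -
            have "C \<inter> D = {}" using D by auto
            then show ?thesis using additive[of C D] nonneg[of C] nonneg[of D] by (simp add: ennreal_plus[symmetric] del: ennreal_plus)
          qed
          also have "\<dots> \<le> nu V" by (rule nu_ge) (use C D clop_Un in auto)
          finally show "ennreal (lam C) + ennreal (lam D) \<le> nu V" .
        qed
        finally show ?thesis .
      qed
      ultimately show "ennreal (lam C) + mu (B - U) \<le> nu V"
        by (meson add_left_mono order_trans)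
    qed
    finally show ?thesis .
  qed
  ultimately show "mu (B \<inter> U) + mu (B - U) \<le> nu V"
    by (meson add_right_mono order_trans)
qed

lemma open_in_lambda:
  assumes "open U"
  shows "U \<in> lambda_system UNIV (Pow UNIV) mu"
proof -
  have "mu (U \<inter> x) + mu ((UNIV - U) \<inter> x) = mu x" for x
  proof (rule antisym)
    show "mu (U \<inter> x) + mu ((UNIV - U) \<inter> x) \<le> mu x"
      using open_split[OF assms, of x] by (simp add: Int_commute Diff_eq)
    have "mu x \<le> mu (U \<inter> x) + mu ((UNIV - U) \<inter> x)"
      using mu_subadd[of "U \<inter> x" "(UNIV - U) \<inter> x"] by (metis Diff_partition Int_Diff Int_Diff_Un Int_commute inf_top_left)
    then show "mu x \<le> mu (U \<inter> x) + mu ((UNIV - U) \<inter> x)" .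
  qed
  then show ?thesis by (auto simp: lambda_system_def)
qed

lemma ms_borel: "measure_space UNIV (sets borel) mu"
proof -
  have oms: "outer_measure_space (Pow UNIV) mu"
    unfolding outer_measure_space_def positive_def increasing_def countably_subadditive_def
    using mu_empty mu_mono mu_countable_subadd by auto
  have msL: "measure_space UNIV (lambda_system UNIV (Pow UNIV) mu) mu"
    using sigma_algebra.caratheodory_lemma[OF sigma_algebra_Pow oms] by simp
  then have saL: "sigma_algebra UNIV (lambda_system UNIV (Pow UNIV) mu)"
    by (simp add: measure_space_def)
  have "sets borel \<subseteq> lambda_system UNIV (Pow UNIV) mu"
    unfolding sets_borel
    by (rule sigma_algebra.sigma_sets_subset[OF saL]) (use open_in_lambda in auto)
  then show ?thesis
    using measure_down[OF msL sets.sigma_algebra_axioms[of borel, unfolded space_borel]] by simp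
qed

definition Mc :: "('x \<Rightarrow> bool) measure" where
  "Mc = measure_of UNIV (sets borel) mu"

lemma Mc_sets: "sets Mc = sets borel"
proof -
  have sa: "sigma_algebra (UNIV::('x\<Rightarrow>bool) set) (sets borel)" using ms_borel by (simp add: measure_space_def)
  show ?thesis unfolding Mc_def
    by (subst sets_measure_of) (auto simp: sigma_algebra.sigma_sets_eq[OF sa])
qed

lemma Mc_space: "space Mc = UNIV"
  unfolding Mc_def by (simp add: space_measure_of_conv)

lemma Mc_emeasure: "A \<in> sets borel \<Longrightarrow> emeasure Mc A = mu A"
proof -
  assume A: "A \<in> sets borel"
  have "sigma_algebra (UNIV::('x\<Rightarrow>bool) set) (sets borel) \<and> positive (sets borel) mu \<and> countably_additive (sets borel) mu"
    using ms_borel by (simp add: measure_space_def)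
  then show ?thesis unfolding Mc_def using emeasure_measure_of_sigma[of UNIV "sets borel" mu A] A by blast
qed

lemma Mc_prob: "prob_space Mc"
  by (rule prob_spaceI) (simp add: Mc_space Mc_emeasure mu_UNIV)

lemma Mc_clop: "clop C \<Longrightarrow> ennreal (lam C) \<le> emeasure Mc C"
  using mu_ge_clop[of C] Mc_emeasure[of C] by (auto simp: clop_def)

lemma mu_compl: "A \<in> sets borel \<Longrightarrow> mu A + mu (- A) = 1"
proof -
  assume A: "A \<in> sets borel"
  have "emeasure Mc A + emeasure Mc (- A) = emeasure Mc (A \<union> - A)"
    by (rule plus_emeasure) (use A in \<open>auto simp: Mc_sets\<close>)
  then show ?thesis using A by (simp add: Mc_emeasure mu_UNIV)
qed

lemma Mc_regular: "regular_borel_measure Mc"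
  unfolding regular_borel_measure_def
proof (intro conjI ballI)
  show "sets Mc = sets borel" by (rule Mc_sets)
  fix A :: "('x \<Rightarrow> bool) set" assume A: "A \<in> sets borel"
  have "(INF U\<in>{U. open U \<and> A \<subseteq> U}. emeasure Mc U) = (INF U\<in>{U. open U \<and> A \<subseteq> U}. mu U)"
    by (rule INF_cong) (auto simp: Mc_emeasure)
  also have "\<dots> = mu A"
  proof (rule antisym)
    show "mu A \<le> (INF U\<in>{U. open U \<and> A \<subseteq> U}. mu U)" by (rule INF_greatest) (auto intro: mu_mono)
    have "(INF U\<in>{U. open U \<and> A \<subseteq> U}. mu U) \<le> (INF U\<in>{U. open U \<and> A \<subseteq> U}. nu U)"
      by (rule INF_mono) (auto intro: mu_le_nu)
    then show "(INF U\<in>{U. open U \<and> A \<subseteq> U}. mu U) \<le> mu A" by (simp add: mu_def)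
  qed
  finally show "emeasure Mc A = (INF U\<in>{U. open U \<and> A \<subseteq> U}. emeasure Mc U)"
    using A by (simp add: Mc_emeasure)
  have cK: "compact K \<Longrightarrow> K \<in> sets borel" for K :: "('x \<Rightarrow> bool) set"
    by (intro borel_closed compact_closed_fb)
  have "(SUP K\<in>{K. compact K \<and> K \<subseteq> A}. emeasure Mc K) = (SUP K\<in>{K. compact K \<and> K \<subseteq> A}. mu K)"
    by (rule SUP_cong) (auto simp: Mc_emeasure cK)
  also have "\<dots> = mu A"
  proof (rule antisym)
    show "(SUP K\<in>{K. compact K \<and> K \<subseteq> A}. mu K) \<le> mu A" by (rule SUP_least) (auto intro: mu_mono)
    show "mu A \<le> (SUP K\<in>{K. compact K \<and> K \<subseteq> A}. mu K)"
    proof (rule ennreal_le_epsilon)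
      fix e :: real assume "0 < e"
      have "mu (- A) < mu (- A) + ennreal e" using mu_fin[of "- A"] \<open>0 < e\<close> by simp
      then obtain U where U: "open U" "- A \<subseteq> U" "nu U < mu (- A) + ennreal e"
        unfolding mu_def[of "- A"] by (subst (asm) INF_less_iff) auto
      define K where "K = - U"
      have K: "compact K" "K \<subseteq> A"
        using U compact_UNIV_fb closed_Int_compact[of K UNIV] by (auto simp: K_def)
      have Kb: "K \<in> sets borel" using cK K by simp
      have "mu U \<le> nu U" by (rule mu_le_nu) (use U in auto)
      have "mu A + mu (- A) = mu K + mu U"
        using mu_compl[OF A] mu_compl[OF Kb] by (simp add: K_def)
      also have "\<dots> \<le> mu K + (mu (- A) + ennreal e)"
        using \<open>mu U \<le> nu U\<close> U(3) by (meson add_left_mono less_imp_le order_trans)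
      finally have "mu (- A) + mu A \<le> mu (- A) + (mu K + ennreal e)" by (simp add: ac_simps)
      then have "mu A \<le> mu K + ennreal e"
        using mu_fin[of "- A"] by (auto simp: ennreal_add_left_cancel_le)
      also have "mu K \<le> (SUP K\<in>{K. compact K \<and> K \<subseteq> A}. mu K)" by (rule SUP_upper) (use K in auto)
      finally show "mu A \<le> (SUP K\<in>{K. compact K \<and> K \<subseteq> A}. mu K) + ennreal e" by simp
    qed
  qed
  finally show "emeasure Mc A = (SUP K\<in>{K. compact K \<and> K \<subseteq> A}. emeasure Mc K)"
    using A by (simp add: Mc_emeasure)
qed

end


lemma var_aux:
  fixes x y :: real
  assumes y: "0 \<le> y" and h: "\<And>u. 0 < u \<Longrightarrow> u \<le> 1 \<Longrightarrow> 0 \<le> 2*u*x + u^2*y"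
  shows "0 \<le> x"
proof (rule ccontr)
  assume "\<not> 0 \<le> x" then have x: "x < 0" by simp
  define u where "u = min 1 (- x / (y + 1))"
  have "0 < - x / (y + 1)" using x y by (intro divide_pos_pos) auto
  then have u0: "0 < u" by (simp add: u_def)
  have u1: "u \<le> 1" by (simp add: u_def)
  have "u \<le> - x / (y + 1)" unfolding u_def by (rule min.cobounded2)
  then have "u * y \<le> (- x / (y + 1)) * y" by (rule mult_right_mono[OF _ y])
  also have "\<dots> < - x"
  proof -
    have "(- x / (y + 1)) * y = - x * (y / (y + 1))" by simp
    also have "\<dots> < - x * 1" using x y by (intro mult_strict_left_mono) auto
    finally show ?thesis by simp
  qed
  finally have "u * y < - x" .
  then have "2 * x + u * y < 0" using x by simp
  then have "u * (2 * x + u * y) < 0" using u0 by (simp add: mult_pos_neg)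
  moreover have "u * (2 * x + u * y) = 2*u*x + u^2*y" by (simp add: power2_eq_square algebra_simps)
  ultimately show False using h[OF u0 u1] by simp
qed

lemma LP:
  fixes T :: "'t set" and F :: "'s set" and a :: "'s \<Rightarrow> 't \<Rightarrow> real" and c :: real
  assumes fT: "finite T" and fF: "finite F" and Tne: "T \<noteq> {}"
    and a0: "\<And>S t. 0 \<le> a S t" and a1: "\<And>S t. a S t \<le> 1"
    and cov: "\<And>S. S \<in> F \<Longrightarrow> \<exists>t\<in>T. 0 < a S t"
    and c0: "0 \<le> c"
    and dual: "\<And>q. (\<forall>S\<in>F. 0 \<le> q S) \<Longrightarrow> (\<forall>t\<in>T. (\<Sum>S\<in>F. q S * a S t) \<le> 1) \<Longrightarrow> c * (\<Sum>S\<in>F. q S) \<le> 1"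
  shows "\<exists>p. (\<forall>t\<in>T. 0 \<le> p t) \<and> (\<Sum>t\<in>T. p t) = 1 \<and> (\<forall>S\<in>F. c \<le> (\<Sum>t\<in>T. p t * a S t))"
proof -
  define I where "I = Inl ` T \<union> Inr ` F"
  define B where "B i = (if i \<in> I then {0..1::real} else {0})" for i
  define D where "D = PiE UNIV B \<inter> {w. (\<Sum>t\<in>T. w (Inl t)) = 1}"
  define P where "P w S = (\<Sum>t\<in>T. w (Inl t) * a S t)" for w :: "'t + 's \<Rightarrow> real" and S
  define g where "g w = (\<Sum>S\<in>F. (c - P w S + w (Inr S))^2)" for w
  have cPi: "compact (PiE UNIV B)"
  proof -
    have "compactin (product_topology (\<lambda>_. euclidean) UNIV) (PiE UNIV B)"
      by (subst compactin_PiE) (auto simp: B_def compactin_euclidean_iff)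
    then show ?thesis by (simp add: euclidean_product_topology compactin_euclidean_iff)
  qed
  have cl: "closed {w::'t + 's \<Rightarrow> real. (\<Sum>t\<in>T. w (Inl t)) = 1}"
    by (rule closed_Collect_eq) (auto intro!: continuous_intros)
  have cD: "compact D" unfolding D_def using cPi cl by (rule compact_Int_closed)
  obtain t0 where t0: "t0 \<in> T" using Tne by blast
  define w0 where "w0 i = (if i = Inl t0 then 1 else (0::real))" for i :: "'t + 's"
  have "w0 \<in> D"
  proof -
    have "w0 \<in> PiE UNIV B" using t0 by (auto simp: w0_def B_def I_def PiE_iff)
    moreover have "(\<Sum>t\<in>T. w0 (Inl t)) = 1" using t0 fT by (simp add: w0_def)
    ultimately show ?thesis by (simp add: D_def)
  qed
  then have Dne: "D \<noteq> {}" by blast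
  have contg: "continuous_on D g"
    unfolding g_def P_def
    by (intro continuous_intros continuous_on_subset[OF continuous_on_product_coordinates] subset_UNIV)
  obtain ws where ws: "ws \<in> D" and wmin: "\<And>w. w \<in> D \<Longrightarrow> g ws \<le> g w"
    using continuous_attains_inf[OF cD Dne contg] by blast
  have wsB: "ws i \<in> B i" for i using ws by (auto simp: D_def PiE_iff)
  have wsum: "(\<Sum>t\<in>T. ws (Inl t)) = 1" using ws by (simp add: D_def)
  define e where "e S = c - P ws S + ws (Inr S)" for S
  define d where "d w S = P ws S - P w S + (w (Inr S) - ws (Inr S))" for w S
  have var: "0 \<le> (\<Sum>S\<in>F. e S * d w S)" if w: "w \<in> D" for w
  proof (rule var_aux)
    show "0 \<le> (\<Sum>S\<in>F. (d w S)^2)" by (simp add: sum_nonneg)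
    fix u :: real assume u: "0 < u" "u \<le> 1"
    define wu where "wu i = ws i + u * (w i - ws i)" for i
    have wB: "w i \<in> B i" for i using w by (auto simp: D_def PiE_iff)
    have "wu \<in> D"
    proof -
      have "wu i \<in> B i" for i
      proof (cases "i \<in> I")
        case True
        then have "0 \<le> ws i" "ws i \<le> 1" "0 \<le> w i" "w i \<le> 1" using wsB[of i] wB[of i] by (auto simp: B_def)
        note h = this
        have e1: "ws i + u * (w i - ws i) = ws i - u * ws i + u * w i" by (simp add: algebra_simps)
        have f1: "u * ws i \<le> ws i" by (rule mult_left_le_one_le) (use h u in auto)
        have f2: "0 \<le> u * w i" using h u by simp
        have f3: "u * w i \<le> u" by (rule mult_left_le) (use h u in auto)
        have "(1 - u) * ws i \<le> 1 - u" by (rule mult_left_le) (use h u in auto)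
        then have f4: "ws i - u * ws i \<le> 1 - u" by (simp add: algebra_simps)
        have "0 \<le> ws i + u * (w i - ws i)" "ws i + u * (w i - ws i) \<le> 1"
          unfolding e1 using f1 f2 f3 f4 by linarith+
        then show ?thesis using True by (simp add: B_def wu_def)
      next
        case False
        then show ?thesis using wsB[of i] wB[of i] by (simp add: B_def wu_def)
      qed
      moreover have "(\<Sum>t\<in>T. wu (Inl t)) = 1"
      proof -
        have "(\<Sum>t\<in>T. w (Inl t)) = 1" using w by (simp add: D_def)
        then show ?thesis using wsum
          by (simp add: wu_def sum.distrib sum_distrib_left[symmetric] sum_subtractf)
      qed
      ultimately show ?thesis by (auto simp: D_def PiE_iff)
    qed
    then have "g ws \<le> g wu" by (rule wmin)
    moreover have "g wu = g ws + 2*u*(\<Sum>S\<in>F. e S * d w S) + u^2 * (\<Sum>S\<in>F. (d w S)^2)"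
    proof -
      have PL: "P wu S = P ws S + u * (P w S - P ws S)" for S
        by (simp add: P_def wu_def algebra_simps sum.distrib sum_distrib_left sum_subtractf)
      have pt: "c - P wu S + wu (Inr S) = e S + u * d w S" for S
        by (simp add: PL e_def d_def wu_def algebra_simps)
      have "g wu = (\<Sum>S\<in>F. (e S + u * d w S)^2)" by (simp add: g_def pt)
      also have "\<dots> = (\<Sum>S\<in>F. (e S)^2 + 2*u*(e S * d w S) + u^2 * (d w S)^2)"
        by (rule sum.cong) (simp_all add: power2_eq_square algebra_simps)
      also have "\<dots> = (\<Sum>S\<in>F. (e S)^2) + 2*u*(\<Sum>S\<in>F. e S * d w S) + u^2 * (\<Sum>S\<in>F. (d w S)^2)"
        by (simp add: sum.distrib sum_distrib_left)
      finally show ?thesis by (simp add: g_def e_def)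
    qed
    ultimately show "0 \<le> 2*u*(\<Sum>S\<in>F. e S * d w S) + u^2 * (\<Sum>S\<in>F. (d w S)^2)" by simp
  qed
  have pnn: "0 \<le> ws (Inl t)" if "t \<in> T" for t using wsB[of "Inl t"] that by (auto simp: B_def I_def)
  have P1: "P ws S \<le> 1" for S
  proof -
    have "P ws S \<le> (\<Sum>t\<in>T. ws (Inl t) * 1)" unfolding P_def
      by (rule sum_mono) (use pnn a1 in \<open>auto intro: mult_left_le\<close>)
    then show ?thesis using wsum by simp
  qed
  have P0: "0 \<le> P ws S" for S unfolding P_def by (rule sum_nonneg) (use pnn a0 in auto)
  have coord: "0 \<le> e S0 * (v - ws (Inr S0))" if S0: "S0 \<in> F" and v: "0 \<le> v" "v \<le> 1" for S0 v
  proof -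
    define w where "w = ws(Inr S0 := v)"
    have "w \<in> D"
    proof -
      have "w i \<in> B i" for i using wsB[of i] S0 v by (auto simp: w_def B_def I_def)
      moreover have "(\<Sum>t\<in>T. w (Inl t)) = 1" using wsum by (simp add: w_def)
      ultimately show ?thesis by (auto simp: D_def PiE_iff)
    qed
    have Pw: "P w S = P ws S" for S by (simp add: P_def w_def)
    have "(\<Sum>S\<in>F. e S * d w S) = (\<Sum>S\<in>F. if S = S0 then e S0 * (v - ws (Inr S0)) else 0)"
      by (rule sum.cong) (auto simp: d_def w_def Pw[unfolded w_def])
    also have "\<dots> = e S0 * (v - ws (Inr S0))" using S0 fF by simp
    finally show ?thesis using var[OF \<open>w \<in> D\<close>] by simp
  qed
  have ys01: "0 \<le> ws (Inr S)" "ws (Inr S) \<le> 1" if "S \<in> F" for S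
    using wsB[of "Inr S"] that by (auto simp: B_def I_def)
  have e0: "0 \<le> e S" if S: "S \<in> F" for S
  proof (cases "ws (Inr S) < 1")
    case True
    then show ?thesis using coord[OF S, of 1] by (simp add: zero_le_mult_iff)
  next
    case False
    then have "ws (Inr S) = 1" using ys01[OF S] by simp
    then show ?thesis using P1[of S] c0 by (simp add: e_def)
  qed
  have ey: "e S * ws (Inr S) = 0" if S: "S \<in> F" for S
  proof -
    have "0 \<le> e S * (0 - ws (Inr S))" using coord[OF S, of 0] by simp
    moreover have "0 \<le> e S * ws (Inr S)" using e0[OF S] ys01[OF S] by simp
    ultimately show ?thesis by simp
  qed
  define \<beta> where "\<beta> = (\<Sum>S\<in>F. e S * P ws S)"
  have dirac: "(\<Sum>S\<in>F. e S * a S t1) \<le> \<beta>" if t1: "t1 \<in> T" for t1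
  proof -
    define w where "w i = (case i of Inl t \<Rightarrow> (if t = t1 then 1 else 0) | Inr S \<Rightarrow> ws (Inr S))" for i
    have "w \<in> D"
    proof -
      have "w i \<in> B i" for i
        using wsB[of i] t1 by (cases i) (auto simp: w_def B_def I_def)
      moreover have "(\<Sum>t\<in>T. w (Inl t)) = 1" using t1 fT by (simp add: w_def)
      ultimately show ?thesis by (auto simp: D_def PiE_iff)
    qed
    have Pw: "P w S = a S t1" for S
    proof -
      have "P w S = (\<Sum>t\<in>T. if t = t1 then a S t else 0)" unfolding P_def
        by (rule sum.cong) (auto simp: w_def)
      then show ?thesis using t1 fT by simp
    qed
    have "0 \<le> (\<Sum>S\<in>F. e S * d w S)" by (rule var[OF \<open>w \<in> D\<close>])
    also have "\<dots> = \<beta> - (\<Sum>S\<in>F. e S * a S t1)"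
      by (simp add: d_def Pw w_def \<beta>_def algebra_simps sum_subtractf[symmetric])
    finally show ?thesis by simp
  qed
  have beta_eq: "\<beta> = c * (\<Sum>S\<in>F. e S) - (\<Sum>S\<in>F. (e S)^2)"
  proof -
    have "\<beta> = (\<Sum>S\<in>F. c * e S + e S * ws (Inr S) - (e S)^2)"
      unfolding \<beta>_def by (rule sum.cong) (simp_all add: e_def power2_eq_square algebra_simps)
    also have "\<dots> = (\<Sum>S\<in>F. c * e S - (e S)^2)"
      by (rule sum.cong) (simp_all add: ey)
    finally show ?thesis by (simp add: sum_subtractf sum_distrib_left)
  qed
  show ?thesis
  proof (rule exI[of _ "\<lambda>t. ws (Inl t)"], intro conjI ballI)
    show "0 \<le> ws (Inl t)" if "t \<in> T" for t using pnn that .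
    show "(\<Sum>t\<in>T. ws (Inl t)) = 1" by (rule wsum)
    fix S1 assume S1: "S1 \<in> F"
    show "c \<le> (\<Sum>t\<in>T. ws (Inl t) * a S1 t)"
    proof (rule ccontr)
      assume "\<not> c \<le> (\<Sum>t\<in>T. ws (Inl t) * a S1 t)"
      then have "P ws S1 < c" by (simp add: P_def)
      then have eS1: "0 < e S1" using ys01[OF S1] by (simp add: e_def)
      obtain t1 where t1: "t1 \<in> T" "0 < a S1 t1" using cov[OF S1] by blast
      have "0 < e S1 * a S1 t1" using eS1 t1 by simp
      also have "\<dots> \<le> (\<Sum>S\<in>F. e S * a S t1)"
        by (rule member_le_sum) (use S1 fF e0 a0 in auto)
      also have "\<dots> \<le> \<beta>" by (rule dirac[OF t1(1)])
      finally have b0: "0 < \<beta>" .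
      have sq: "0 < (\<Sum>S\<in>F. (e S)^2)"
      proof -
        have "(e S1)^2 \<le> (\<Sum>S\<in>F. (e S)^2)" by (rule member_le_sum) (use S1 fF in auto)
        moreover have "0 < (e S1)^2" using eS1 by simp
        ultimately show ?thesis by linarith
      qed
      define q where "q S = e S / \<beta>" for S
      have "c * (\<Sum>S\<in>F. q S) \<le> 1"
      proof (rule dual)
        show "\<forall>S\<in>F. 0 \<le> q S" using e0 b0 by (simp add: q_def)
        show "\<forall>t\<in>T. (\<Sum>S\<in>F. q S * a S t) \<le> 1"
        proof
          fix t assume t: "t \<in> T"
          have "(\<Sum>S\<in>F. q S * a S t) = (\<Sum>S\<in>F. e S * a S t) / \<beta>"
            by (simp add: q_def sum_divide_distrib)
          also have "\<dots> \<le> 1" using dirac[OF t] b0 by simp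
          finally show "(\<Sum>S\<in>F. q S * a S t) \<le> 1" .
        qed
      qed
      then have "c * (\<Sum>S\<in>F. e S) / \<beta> \<le> 1" by (simp add: q_def sum_divide_distrib[symmetric])
      then have "c * (\<Sum>S\<in>F. e S) \<le> \<beta>" using b0 by (simp add: divide_le_eq)
      then show False using beta_eq sq by simp
    qed
  qed
qed



lemma charge_exists:
  fixes V :: "'x dataset set" and c :: real
  assumes fin: "\<And>F. finite F \<Longrightarrow> F \<subseteq> V \<Longrightarrow> \<exists>p T. finite T \<and> (\<forall>t\<in>T. 0 \<le> p t) \<and> (\<Sum>t\<in>T. p t) = 1
      \<and> (\<forall>S\<in>F. c \<le> (\<Sum>t\<in>T. p t * (if consistent t S then 1 else 0)))"
  shows "\<exists>lam. charge lam \<and> (\<forall>S\<in>V. c \<le> lam {h. consistent h S})"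
proof -
  define K0 where "K0 = PiE UNIV (\<lambda>_::('x\<Rightarrow>bool) set. {0..1::real})"
  define Ctot where "Ctot = {l::('x\<Rightarrow>bool) set \<Rightarrow> real. l UNIV = 1}"
  define Cadd where "Cadd A B = {l::('x\<Rightarrow>bool) set \<Rightarrow> real. l (A \<union> B) = l A + l B}" for A B
  define Con where "Con S = {l::('x\<Rightarrow>bool) set \<Rightarrow> real. c \<le> l {h. consistent h S}}" for S
  define Fam where "Fam = {Ctot} \<union> (\<lambda>(A,B). Cadd A B) ` {(A,B). A \<inter> B = {}} \<union> Con ` V"
  have cK0: "compact K0"
  proof -
    have "compactin (product_topology (\<lambda>_. euclidean) UNIV) K0"
      unfolding K0_def by (subst compactin_PiE) (auto simp: compactin_euclidean_iff)
    then show ?thesis by (simp add: euclidean_product_topology compactin_euclidean_iff)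
  qed
  have coord: "continuous_on UNIV (\<lambda>l::('x\<Rightarrow>bool) set \<Rightarrow> real. l A)" for A
    by (rule continuous_on_product_coordinates)
  have clF: "closed X" if "X \<in> Fam" for X
  proof -
    have "closed Ctot" unfolding Ctot_def by (rule closed_Collect_eq) (auto intro: coord continuous_on_const)
    moreover have "closed (Cadd A B)" for A B unfolding Cadd_def
      by (rule closed_Collect_eq) (auto intro: coord continuous_on_add)
    moreover have "closed (Con S)" for S unfolding Con_def
      by (rule closed_Collect_le) (auto intro: coord continuous_on_const)
    ultimately show ?thesis using that by (auto simp: Fam_def)
  qed
  have "K0 \<inter> \<Inter>Fam \<noteq> {}"
  proof (rule compact_imp_fip[OF cK0 clF])
    fix F' assume F': "finite F'" "F' \<subseteq> Fam"
    have "finite (F' \<inter> Con ` V)" using F' by simp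
    then obtain F where F: "F \<subseteq> V" "finite F" "F' \<inter> Con ` V = Con ` F"
      using finite_subset_image[of "F' \<inter> Con ` V" Con V] by blast
    obtain p T where pT: "finite T" "\<forall>t\<in>T. 0 \<le> p t" "(\<Sum>t\<in>T. p t) = 1"
      "\<forall>S\<in>F. c \<le> (\<Sum>t\<in>T. p t * (if consistent t S then 1 else 0))"
      using fin[OF F(2) F(1)] by blast
    define l0 where "l0 B = (\<Sum>t\<in>T. p t * indicator B t)" for B :: "('x\<Rightarrow>bool) set"
    have l0ge: "0 \<le> l0 B" for B unfolding l0_def by (rule sum_nonneg) (use pT in auto)
    have l0le: "l0 B \<le> 1" for B
    proof -
      have "l0 B \<le> (\<Sum>t\<in>T. p t)" unfolding l0_def
        by (rule sum_mono) (use pT in \<open>auto simp: indicator_def\<close>)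
      then show ?thesis using pT by simp
    qed
    have "l0 \<in> K0" using l0ge l0le by (auto simp: K0_def)
    moreover have "l0 \<in> X" if "X \<in> F'" for X
    proof -
      have "X \<in> Fam" using that F' by auto
      then consider "X = Ctot" | A B where "A \<inter> B = {}" "X = Cadd A B" | S where "S \<in> V" "X = Con S"
        unfolding Fam_def by blast
      then show ?thesis
      proof cases
        case 1 then show ?thesis using pT by (simp add: Ctot_def l0_def)
      next
        case (2 A B)
        have "l0 (A \<union> B) = l0 A + l0 B" unfolding l0_def sum.distrib[symmetric]
          by (rule sum.cong) (use 2 in \<open>auto simp: indicator_def\<close>)
        then show ?thesis using 2 by (simp add: Cadd_def)
      next
        case (3 S)
        then have "X \<in> Con ` F" using F(3) that by blast
        then obtain S' where S': "S' \<in> F" "X = Con S'" by blast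
        have "l0 {h. consistent h S'} = (\<Sum>t\<in>T. p t * (if consistent t S' then 1 else 0))"
          unfolding l0_def by (rule sum.cong) (auto simp: indicator_def)
        then show ?thesis using S' pT(4) by (simp add: Con_def)
      qed
    qed
    ultimately show "K0 \<inter> \<Inter>F' \<noteq> {}" by blast
  qed
  then obtain lam where lam: "lam \<in> K0" "lam \<in> \<Inter>Fam" by blast
  have "charge lam"
  proof
    show "0 \<le> lam A" for A using lam(1) by (auto simp: K0_def)
    show "lam UNIV = 1" using lam(2) by (auto simp: Fam_def Ctot_def)
    show "lam (A \<union> B) = lam A + lam B" if "A \<inter> B = {}" for A B
      using lam(2) that unfolding Fam_def Cadd_def by blast
  qed
  moreover have "\<forall>S\<in>V. c \<le> lam {h. consistent h S}"
    using lam(2) by (auto simp: Fam_def Con_def)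
  ultimately show ?thesis by blast
qed



lemma nnsum_ge: "finite G \<Longrightarrow> G \<subseteq> A \<Longrightarrow> ennreal (sum f G) \<le> nnsum f A"
  unfolding nnsum_def by (rule SUP_upper) auto

lemma nnsum_le1: "(\<And>G. finite G \<Longrightarrow> G \<subseteq> A \<Longrightarrow> sum f G \<le> 1) \<Longrightarrow> nnsum f A \<le> 1"
  unfolding nnsum_def by (rule SUP_least) (auto simp: ennreal_leI[of _ 1, simplified])

lemma omega_ge_sum:
  fixes H :: "('x \<Rightarrow> bool) set"
  assumes fF: "finite F" and FV: "F \<subseteq> Gm_vertices H m"
    and q0: "\<forall>S\<in>F. 0 \<le> q S"
    and qc: "\<forall>t. (\<Sum>S\<in>F. q S * (if consistent t S then 1 else 0)) \<le> 1"
  shows "ennreal (\<Sum>S\<in>F. q S) \<le> frac_clique_number H m"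
proof -
  define \<delta> where "\<delta> S = (if S \<in> F then q S else 0)" for S
  have fc: "fractional_clique H m \<delta>"
    unfolding fractional_clique_def
  proof (intro conjI allI impI ballI)
    show "0 \<le> \<delta> S" for S using q0 by (simp add: \<delta>_def)
    fix I assume I: "Gm_independent H m I"
    show "nnsum \<delta> I \<le> 1"
    proof (rule nnsum_le1)
      fix G assume G: "finite G" "G \<subseteq> I"
      define t where "t x = (\<exists>S\<in>G \<inter> F. (x, True) \<in> set S)" for x
      have cons: "consistent t S" if S: "S \<in> G \<inter> F" for S
        unfolding consistent_def
      proof (intro allI impI)
        fix i assume i: "i < length S"
        obtain x b where xb: "S ! i = (x, b)" by force
        have mem: "(x, b) \<in> set S" using i xb nth_mem by metis
        show "t (fst (S ! i)) = snd (S ! i)"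
        proof (cases b)
          case True then show ?thesis using mem S xb by (auto simp: t_def)
        next
          case False
          have "\<not> t x"
          proof
            assume "t x"
            then obtain S' where S': "S' \<in> G \<inter> F" "(x, True) \<in> set S'" by (auto simp: t_def)
            have "Gm_adj S S'" using mem False S'(2) by (auto simp: Gm_adj_def)
            moreover have "S \<in> I" "S' \<in> I" using S S' G by auto
            ultimately show False using I by (auto simp: Gm_independent_def)
          qed
          then show ?thesis using False xb by simp
        qed
      qed
      have "sum \<delta> G = (\<Sum>S\<in>G \<inter> F. q S)"
        using G(1) by (simp add: \<delta>_def sum.If_cases Int_commute)
      also have "\<dots> = (\<Sum>S\<in>G \<inter> F. q S * (if consistent t S then 1 else 0))"
        by (rule sum.cong) (auto simp: cons)
      also have "\<dots> \<le> (\<Sum>S\<in>F. q S * (if consistent t S then 1 else 0))"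
        by (rule sum_mono2) (use fF q0 in auto)
      also have "\<dots> \<le> 1" using qc by blast
      finally show "sum \<delta> G \<le> 1" .
    qed
  qed
  have "ennreal (\<Sum>S\<in>F. q S) = ennreal (sum \<delta> F)" by (simp add: \<delta>_def)
  also have "\<dots> \<le> nnsum \<delta> (Gm_vertices H m)" by (rule nnsum_ge[OF fF FV])
  also have "\<dots> \<le> frac_clique_number H m"
    unfolding frac_clique_number_def by (rule SUP_upper) (use fc in auto)
  finally show ?thesis .
qed

theorem mainTheorem8:
  fixes H :: "('x \<Rightarrow> bool) set" and m :: nat
  shows "\<exists>\<mu> :: ('x \<Rightarrow> bool) measure.
           prob_space \<mu> \<and> regular_borel_measure \<mu> \<and>
           (\<forall>S. length S = m \<longrightarrow> realizable H S \<longrightarrow>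
              emeasure \<mu> {h. consistent h S} \<ge> 1 / frac_clique_number H m)"
proof -
  define V where "V = Gm_vertices H m"
  define \<omega> where "\<omega> = frac_clique_number H m"
  define c where "c = (if \<omega> = \<top> then 0 else 1 / enn2real \<omega>)"
  have c0: "0 \<le> c" by (simp add: c_def)
  have fin: "\<exists>p T. finite T \<and> (\<forall>t\<in>T. 0 \<le> p t) \<and> (\<Sum>t\<in>T. p t) = 1
      \<and> (\<forall>S\<in>F. c \<le> (\<Sum>t\<in>T. p t * (if consistent t S then 1 else 0)))"
    if fF: "finite F" and FV: "F \<subseteq> V" for F
  proof -
    define X0 where "X0 = (\<Union>S\<in>F. fst ` set S)"
    have fX0: "finite X0" using fF by (simp add: X0_def)
    define T where "T = {t::'x\<Rightarrow>bool. \<forall>x. x \<notin> X0 \<longrightarrow> \<not> t x}"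
    have fT: "finite T"
    proof -
      have "T \<subseteq> (\<lambda>A x. x \<in> A) ` Pow X0"
      proof
        fix t assume "t \<in> T"
        then have "t = (\<lambda>x. x \<in> {x\<in>X0. t x})" by (auto simp: T_def)
        then show "t \<in> (\<lambda>A x. x \<in> A) ` Pow X0" by blast
      qed
      then show ?thesis using fX0 by (rule finite_subset[OF _ finite_imageI[OF finite_Pow_iff[THEN iffD2]]])
    qed
    have Tne: "T \<noteq> {}" by (auto simp: T_def intro!: exI[of _ "\<lambda>_. False"])
    have cov: "\<exists>t\<in>T. 0 < (if consistent t S then 1 else (0::real))" if S: "S \<in> F" for S
    proof -
      have "realizable H S" using S FV by (auto simp: V_def Gm_vertices_def)
      then obtain h where "h \<in> H" "consistent h S" by (auto simp: realizable_def)
      define t where "t x = (x \<in> X0 \<and> h x)" for x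
      have "t \<in> T" by (auto simp: T_def t_def)
      moreover have "consistent t S"
        unfolding consistent_def
      proof (intro allI impI)
        fix i assume i: "i < length S"
        have "fst (S ! i) \<in> X0" using S nth_mem[OF i] by (auto simp: X0_def intro!: bexI[of _ S])
        then show "t (fst (S ! i)) = snd (S ! i)"
          using \<open>consistent h S\<close> i by (auto simp: t_def consistent_def)
      qed
      ultimately show ?thesis by auto
    qed
    have dual: "c * (\<Sum>S\<in>F. q S) \<le> 1"
      if q0: "\<forall>S\<in>F. 0 \<le> q S" and qc: "\<forall>t\<in>T. (\<Sum>S\<in>F. q S * (if consistent t S then 1 else 0)) \<le> 1" for q
    proof -
      have qc': "\<forall>t. (\<Sum>S\<in>F. q S * (if consistent t S then 1 else 0)) \<le> 1"
      proof
        fix t :: "'x \<Rightarrow> bool"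
        define t' where "t' x = (x \<in> X0 \<and> t x)" for x
        have "t' \<in> T" by (auto simp: T_def t'_def)
        have "consistent t' S = consistent t S" if "S \<in> F" for S
        proof -
          have "fst (S ! i) \<in> X0" if "i < length S" for i using \<open>S \<in> F\<close> nth_mem[OF that] by (auto simp: X0_def intro!: bexI[of _ S])
          then show ?thesis by (auto simp: consistent_def t'_def)
        qed
        then have "(\<Sum>S\<in>F. q S * (if consistent t S then 1 else 0)) = (\<Sum>S\<in>F. q S * (if consistent t' S then 1 else 0))"
          by (intro sum.cong) auto
        then show "(\<Sum>S\<in>F. q S * (if consistent t S then 1 else 0)) \<le> 1" using qc \<open>t' \<in> T\<close> by simp
      qed
      have le: "ennreal (\<Sum>S\<in>F. q S) \<le> \<omega>"
        unfolding \<omega>_def by (rule omega_ge_sum[OF fF FV[unfolded V_def] q0 qc'])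
      show ?thesis
      proof (cases "\<omega> = \<top>")
        case True then show ?thesis by (simp add: c_def)
      next
        case False
        have sq0: "0 \<le> (\<Sum>S\<in>F. q S)" using q0 by (simp add: sum_nonneg)
        have "(\<Sum>S\<in>F. q S) \<le> enn2real \<omega>"
          using le False sq0 by (metis enn2real_ennreal enn2real_mono top.not_eq_extremum)
        then show ?thesis using False sq0 by (cases "enn2real \<omega> = 0") (auto simp: c_def divide_le_eq_1)
      qed
    qed
    have a0': "\<And>S t. 0 \<le> (if consistent t S then 1 else (0::real))" by simp
    have a1': "\<And>S t. (if consistent t S then 1 else (0::real)) \<le> 1" by simp
    obtain p where "(\<forall>t\<in>T. 0 \<le> p t) \<and> (\<Sum>t\<in>T. p t) = 1 \<and> (\<forall>S\<in>F. c \<le> (\<Sum>t\<in>T. p t * (if consistent t S then 1 else 0)))"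
      using LP[OF fT fF Tne, where a="\<lambda>S t. if consistent t S then 1 else 0" and c=c, OF a0' a1' cov c0 dual] by blast
    then show ?thesis using fT by blast
  qed
  obtain lam where lam: "charge lam" "\<forall>S\<in>V. c \<le> lam {h. consistent h S}"
    using charge_exists[of V c] fin by blast
  interpret charge lam by (rule lam(1))
  show ?thesis
  proof (intro exI conjI allI impI)
    show "prob_space Mc" by (rule Mc_prob)
    show "regular_borel_measure Mc" by (rule Mc_regular)
    fix S :: "'x dataset" assume S: "length S = m" "realizable H S"
    then have SV: "S \<in> V" by (simp add: V_def Gm_vertices_def)
    have "ennreal c \<le> ennreal (lam {h. consistent h S})" using lam(2) SV by (simp add: ennreal_leI)
    also have "\<dots> \<le> emeasure Mc {h. consistent h S}" by (rule Mc_clop[OF clop_consistent])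
    finally have mc: "ennreal c \<le> emeasure Mc {h. consistent h S}" .
    have w1: "1 \<le> \<omega>"
    proof -
      have "ennreal (\<Sum>S'\<in>{S}. 1) \<le> \<omega>"
        unfolding \<omega>_def
      proof (rule omega_ge_sum)
        show "{S} \<subseteq> Gm_vertices H m" using SV by (simp add: V_def)
        show "\<forall>t. (\<Sum>S'\<in>{S}. 1 * (if consistent t S' then 1 else 0)) \<le> (1::real)" by simp
      qed auto
      then show ?thesis by simp
    qed
    have "1 / \<omega> \<le> ennreal c"
    proof (cases "\<omega> = \<top>")
      case True then show ?thesis by simp
    next
      case False
      then obtain r where r: "\<omega> = ennreal r" "0 \<le> r" by (cases \<omega>) auto
      have "1 \<le> r" using w1 r by simp
      then have "1 / \<omega> = ennreal (1 / r)" using r by (simp add: divide_ennreal[symmetric])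
      also have "\<dots> = ennreal c" using False r by (simp add: c_def)
      finally show ?thesis by simp
    qed
    then show "1 / frac_clique_number H m \<le> emeasure Mc {h. consistent h S}"
      using mc by (simp add: \<omega>_def)
  qed
qed


end
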